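(* Let $R$ be a commutative multiplicative hyperring with identity, let $\alpha$ be a good endomorphism of $R$, and let $I$ be a hyperideal of $R$. Then the following are equivalent: - $I$ is $\alpha$-prime; - for all hyperideals $I_1,I_2$ of $R$, $I_1\circ I_2\subseteq I$ implies $I_1\subseteq I$ or $\alpha(I_2)\subseteq I$.
   Context: A multiplicative hyperring is an abelian group $(R,+)$ with a hyperoperation $\circ:R\times R\to \mathcal P^*(R)$ (nonempty subsets) such that $a\circ(b\circ c)=(a\circ b)\circ c$, $a\circ(b+c)\subseteq a\circ b+a\circ c$, $(b+c)\circ a\subseteq b\circ a+c\circ a$, and $a\circ(-b)=(-a)\circ b=-(a\circ b)$. Products of subsets are unions of elementwise products; in particular $I_1\circ I_2=\bigcup_{a\in I_1,b\in I_2}a\circ b$. Commutative means $a\circ b=b\circ a$. An identity $1$ satisfies $a\in 1\circ a$ for all $a$. A hyperideal is a nonempty $I\subseteq R$ closed under subtraction with $r\circ x\subseteq I$ for $r\in R$, $x\in I$. Standing assumption: every hyperideal is a $\mathbf C$-hyperideal, i.e. for every finite product $A=r_1\circ\cdots\circ r_n$, $A\cap I\ne\emptyset$ implies $A\subseteq I$. A good endomorphism $\alpha$ satisfies $\alpha(x+y)=\alpha(x)+\alpha(y)$ and $\alpha(x\circ y)=\alpha(x)\circ\alpha(y)$; it is applied to sets elementwise. A hyperideal $I$ is $\alpha$-prime if for all $x,y$, $x\circ y\subseteq I$ implies $x\in I$ or $\alpha(y)\in I$. *)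

theory Defs
  imports Main
begin

definition set_hop :: "('a \<Rightarrow> 'a \<Rightarrow> 'a set) \<Rightarrow> 'a set \<Rightarrow> 'a set \<Rightarrow> 'a set" where
  "set_hop m A B = (\<Union>a\<in>A. \<Union>b\<in>B. m a b)"

definition set_plus :: "'a::ab_group_add set \<Rightarrow> 'a set \<Rightarrow> 'a set" where
  "set_plus A B = {x + y | x y. x \<in> A \<and> y \<in> B}"

definition mult_hyperring :: "('a::ab_group_add \<Rightarrow> 'a \<Rightarrow> 'a set) \<Rightarrow> bool" where
  "mult_hyperring m \<longleftrightarrow>
     (\<forall>a b. m a b \<noteq> {}) \<and>
     (\<forall>a b c. set_hop m {a} (m b c) = set_hop m (m a b) {c}) \<and>
     (\<forall>a b c. m a (b + c) \<subseteq> set_plus (m a b) (m a c)) \<and>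
     (\<forall>a b c. m (b + c) a \<subseteq> set_plus (m b a) (m c a)) \<and>
     (\<forall>a b. m a (- b) = uminus ` (m a b) \<and> m (- a) b = uminus ` (m a b))"

definition hcommutative :: "('a \<Rightarrow> 'a \<Rightarrow> 'a set) \<Rightarrow> bool" where
  "hcommutative m \<longleftrightarrow> (\<forall>a b. m a b = m b a)"

definition has_hidentity :: "('a \<Rightarrow> 'a \<Rightarrow> 'a set) \<Rightarrow> 'a \<Rightarrow> bool" where
  "has_hidentity m e \<longleftrightarrow> (\<forall>a. a \<in> m e a)"

definition hyperideal :: "('a::ab_group_add \<Rightarrow> 'a \<Rightarrow> 'a set) \<Rightarrow> 'a set \<Rightarrow> bool" where
  "hyperideal m I \<longleftrightarrow> I \<noteq> {} \<and> (\<forall>x\<in>I. \<forall>y\<in>I. x - y \<in> I) \<and>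
     (\<forall>r x. x \<in> I \<longrightarrow> m r x \<subseteq> I)"

fun hprod :: "('a \<Rightarrow> 'a \<Rightarrow> 'a set) \<Rightarrow> 'a list \<Rightarrow> 'a set" where
  "hprod m [] = {}"
| "hprod m [r] = {r}"
| "hprod m (r # rs) = set_hop m {r} (hprod m rs)"

definition C_hyperideal :: "('a::ab_group_add \<Rightarrow> 'a \<Rightarrow> 'a set) \<Rightarrow> 'a set \<Rightarrow> bool" where
  "C_hyperideal m I \<longleftrightarrow> hyperideal m I \<and>
     (\<forall>rs. rs \<noteq> [] \<longrightarrow> hprod m rs \<inter> I \<noteq> {} \<longrightarrow> hprod m rs \<subseteq> I)"

definition good_endo :: "('a::ab_group_add \<Rightarrow> 'a \<Rightarrow> 'a set) \<Rightarrow> ('a \<Rightarrow> 'a) \<Rightarrow> bool" where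
  "good_endo m \<alpha> \<longleftrightarrow> (\<forall>x y. \<alpha> (x + y) = \<alpha> x + \<alpha> y) \<and>
     (\<forall>x y. \<alpha> ` (m x y) = m (\<alpha> x) (\<alpha> y))"

definition alpha_prime ::
  "('a::ab_group_add \<Rightarrow> 'a \<Rightarrow> 'a set) \<Rightarrow> ('a \<Rightarrow> 'a) \<Rightarrow> 'a set \<Rightarrow> bool" where
  "alpha_prime m \<alpha> I \<longleftrightarrow> hyperideal m I \<and>
     (\<forall>x y. m x y \<subseteq> I \<longrightarrow> x \<in> I \<or> \<alpha> y \<in> I)"

end

theory Submission
  imports Defs
begin
lemma mh_assoc: "mult_hyperring m \<Longrightarrow> set_hop m {a} (m b c) = set_hop m (m a b) {c}"
  unfolding mult_hyperring_def by (elim conjE) simp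
lemma mh_dl: "mult_hyperring m \<Longrightarrow> m a (b + c) \<subseteq> set_plus (m a b) (m a c)"
  unfolding mult_hyperring_def by (elim conjE) simp
lemma mh_dr: "mult_hyperring m \<Longrightarrow> m (b + c) a \<subseteq> set_plus (m b a) (m c a)"
  unfolding mult_hyperring_def by (elim conjE) simp
lemma mh_nl: "mult_hyperring m \<Longrightarrow> m a (- b) = uminus ` (m a b)"
  unfolding mult_hyperring_def by (elim conjE) simp
lemma mh_nr: "mult_hyperring m \<Longrightarrow> m (- a) b = uminus ` (m a b)"
  unfolding mult_hyperring_def by (elim conjE) simp
lemma hi_cl: "hyperideal m I \<Longrightarrow> z \<in> I \<Longrightarrow> m r z \<subseteq> I"
  unfolding hyperideal_def by blast
lemma hi_diff: "hyperideal m I \<Longrightarrow> a \<in> I \<Longrightarrow> b \<in> I \<Longrightarrow> a - b \<in> I"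
  unfolding hyperideal_def by blast

lemma diff_in_I:
  assumes MH: "mult_hyperring m" and HI: "hyperideal m I"
    and s: "m a b \<subseteq> I" "m a c \<subseteq> I"
  shows "m a (b - c) \<subseteq> I"
proof
  fix v assume "v \<in> m a (b - c)"
  have d: "m a (b + - c) \<subseteq> set_plus (m a b) (m a (- c))"
    using mh_dl[OF MH] .
  have "v \<in> set_plus (m a b) (m a (- c))" using d \<open>v \<in> m a (b - c)\<close> by auto
  then obtain p q where "v = p + q" "p \<in> m a b" "q \<in> m a (- c)"
    unfolding set_plus_def by blast
  moreover have "m a (- c) = uminus ` m a c" using mh_nl[OF MH] .
  ultimately obtain q' where "v = p - q'" "p \<in> I" "q' \<in> I" using s by auto
  then show "v \<in> I" using hi_diff[OF HI] by simp
qed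

lemma diff_in_I2:
  assumes MH: "mult_hyperring m" and HI: "hyperideal m I"
    and s: "m b a \<subseteq> I" "m c a \<subseteq> I"
  shows "m (b - c) a \<subseteq> I"
proof
  fix v assume "v \<in> m (b - c) a"
  have d: "m (b + - c) a \<subseteq> set_plus (m b a) (m (- c) a)"
    using mh_dr[OF MH] .
  have "v \<in> set_plus (m b a) (m (- c) a)" using d \<open>v \<in> m (b - c) a\<close> by auto
  then obtain p q where "v = p + q" "p \<in> m b a" "q \<in> m (- c) a"
    unfolding set_plus_def by blast
  moreover have "m (- c) a = uminus ` m c a" using mh_nr[OF MH] .
  ultimately obtain q' where "v = p - q'" "p \<in> I" "q' \<in> I" using s by auto
  then show "v \<in> I" using hi_diff[OF HI] by simp
qed

theorem mainTheorem6:
  fixes m :: "'a::ab_group_add \<Rightarrow> 'a \<Rightarrow> 'a set"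
    and \<alpha> :: "'a \<Rightarrow> 'a" and e :: 'a and I :: "'a set"
  assumes "mult_hyperring m"
    and "hcommutative m"
    and "has_hidentity m e"
    and "\<forall>J. hyperideal m J \<longrightarrow> C_hyperideal m J"
    and "good_endo m \<alpha>"
    and "hyperideal m I"
  shows "alpha_prime m \<alpha> I \<longleftrightarrow>
    (\<forall>I1 I2. hyperideal m I1 \<and> hyperideal m I2 \<and> set_hop m I1 I2 \<subseteq> I
       \<longrightarrow> I1 \<subseteq> I \<or> \<alpha> ` I2 \<subseteq> I)"
proof
  assume AP: "alpha_prime m \<alpha> I"
  show "\<forall>I1 I2. hyperideal m I1 \<and> hyperideal m I2 \<and> set_hop m I1 I2 \<subseteq> I
       \<longrightarrow> I1 \<subseteq> I \<or> \<alpha> ` I2 \<subseteq> I"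
  proof (intro allI impI)
    fix I1 I2 assume h: "hyperideal m I1 \<and> hyperideal m I2 \<and> set_hop m I1 I2 \<subseteq> I"
    show "I1 \<subseteq> I \<or> \<alpha> ` I2 \<subseteq> I"
    proof (rule ccontr)
      assume "\<not> ?thesis"
      then obtain a b where a: "a \<in> I1" "a \<notin> I" and b: "b \<in> I2" "\<alpha> b \<notin> I" by blast
      have "m a b \<subseteq> I" using h a b unfolding set_hop_def by blast
      then show False using AP a b unfolding alpha_prime_def by blast
    qed
  qed
next
  assume R: "\<forall>I1 I2. hyperideal m I1 \<and> hyperideal m I2 \<and> set_hop m I1 I2 \<subseteq> I
       \<longrightarrow> I1 \<subseteq> I \<or> \<alpha> ` I2 \<subseteq> I"
  note MH = assms(1) and HI = assms(6)
  have assoc: "\<And>a b c. set_hop m {a} (m b c) = set_hop m (m a b) {c}"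
    using mh_assoc[OF MH] .
  have comm: "\<And>a b. m a b = m b a" using assms(2) unfolding hcommutative_def by blast
  have Iclos: "\<And>r z. z \<in> I \<Longrightarrow> m r z \<subseteq> I" using hi_cl[OF HI] .
  show "alpha_prime m \<alpha> I"
    unfolding alpha_prime_def
  proof (intro conjI allI impI)
    show "hyperideal m I" by (rule HI)
    fix x y assume xy: "m x y \<subseteq> I"
    define I1 where "I1 = {z. m z y \<subseteq> I}"
    define I2 where "I2 = {w. \<forall>z\<in>I1. m z w \<subseteq> I}"
    have x1: "x \<in> I1" using xy I1_def by simp
    have H1: "hyperideal m I1"
      unfolding hyperideal_def
    proof (intro conjI ballI allI impI)
      show "I1 \<noteq> {}" using x1 by blast
    next
      fix a b assume "a \<in> I1" "b \<in> I1"
      then show "a - b \<in> I1" using diff_in_I2[OF MH HI] I1_def by simp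
    next
      fix r z assume z: "z \<in> I1"
      show "m r z \<subseteq> I1"
      proof
        fix w assume w: "w \<in> m r z"
        have "m w y \<subseteq> set_hop m (m r z) {y}" using w unfolding set_hop_def by blast
        also have "\<dots> = set_hop m {r} (m z y)" using assoc by simp
        also have "\<dots> \<subseteq> I" using z Iclos unfolding I1_def set_hop_def by blast
        finally show "w \<in> I1" unfolding I1_def by simp
      qed
    qed
    have y2: "y \<in> I2" unfolding I2_def I1_def by simp
    have H2: "hyperideal m I2"
      unfolding hyperideal_def
    proof (intro conjI ballI allI impI)
      show "I2 \<noteq> {}" using y2 by blast
    next
      fix a b assume "a \<in> I2" "b \<in> I2"
      then show "a - b \<in> I2" using diff_in_I[OF MH HI] I2_def by simp
    next
      fix r w assume w: "w \<in> I2"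
      show "m r w \<subseteq> I2"
        unfolding I2_def
      proof (rule subsetI, rule CollectI, rule ballI)
        fix v z assume v: "v \<in> m r w" and z: "z \<in> I1"
        have "m z v \<subseteq> set_hop m {z} (m r w)" using v unfolding set_hop_def by blast
        also have "\<dots> = set_hop m (m z r) {w}" using assoc by simp
        also have "\<dots> \<subseteq> I"
        proof -
          have "m r z \<subseteq> I1" using hi_cl[OF H1 z] .
          then have "m z r \<subseteq> I1" using comm by simp
          then show ?thesis using w unfolding I2_def set_hop_def by blast
        qed
        finally show "m z v \<subseteq> I" .
      qed
    qed
    have "set_hop m I1 I2 \<subseteq> I" unfolding set_hop_def I2_def by blast
    then have "I1 \<subseteq> I \<or> \<alpha> ` I2 \<subseteq> I" using R H1 H2 by blast
    then show "x \<in> I \<or> \<alpha> y \<in> I" using x1 y2 by blast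
  qed
qed

end
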